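(* Let $m,n\ge 1$, let $A\in\mathbb{R}^{m\times n}$ be a nonzero matrix of rank $r$ with thin singular value decomposition $A=U_A\Sigma_A V_A^\top$ (so $U_A\in\mathbb{R}^{m\times r}$ has orthonormal columns), let $y\in\mathbb{R}^m$ be nonzero and set $\bar y=y/\|y\|_2$. Let $\mathcal{P}$ be the set of $m\times m$ permutation matrices and $$\operatorname{conv}(\mathcal{P})=\{B\in\mathbb{R}^{m\times m}: B^\top e=e,\ Be=e,\ B\ge 0\}$$ the set of $m\times m$ doubly stochastic matrices, where $e\in\mathbb{R}^m$ is the all-ones vector and $B\ge 0$ means entrywise nonnegativity. Define $f:\mathbb{R}^{m\times m}\to\mathbb{R}$ by $$f(B)=-\big\|(\bar y^\top\otimes U_A^\top)\,\mathrm{vec}(B)\big\|_2^2,$$ where $\otimes$ is the Kronecker product and $\mathrm{vec}$ stacks the columns of a matrix. If the problem $\min_{\Pi\in\mathcal{P}} f(\Pi)$ has a unique minimizer $\hat\Pi$, then $\hat\Pi$ is also the unique minimizer of $\min_{B\in\operatorname{conv}(\mathcal{P})} f(B)$.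
   Context: Notation: $\|\cdot\|_2$ is the Euclidean norm. The function $f$ satisfies $f(B)=-\bar y^\top B^\top U_AU_A^\top B\bar y$, and is concave. *)

theory Defs
  imports "HOL-Analysis.Analysis"
begin

definition kron :: "real^'q^'p \<Rightarrow> real^'t^'s \<Rightarrow> real^('q \<times> 't)^('p \<times> 's)" where
  "kron P Q = (\<chi> ik. \<chi> jl. P $ fst ik $ fst jl * Q $ snd ik $ snd jl)"

text \<open>Column stacking: entry with index (j,i) is B_ij (column j, row i), matching
  the block/within-block index convention of kron.\<close>
definition vecm :: "real^'n^'m \<Rightarrow> real^('n \<times> 'm)" where
  "vecm B = (\<chi> ji. B $ snd ji $ fst ji)"

definition rowmat :: "real^'m \<Rightarrow> real^'m^1" where
  "rowmat y = (\<chi> _ j. y $ j)"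

definition permutation_matrices :: "(real^'m^'m) set" where
  "permutation_matrices = {P. \<exists>p. p permutes (UNIV :: 'm set) \<and>
       P = (\<chi> i j. if p i = j then 1 else 0)}"

definition conv_perm :: "(real^'m^'m) set" where
  "conv_perm = {B. transpose B *v (\<chi> _. 1) = (\<chi> _. 1) \<and> B *v (\<chi> _. 1) = (\<chi> _. 1)
                  \<and> (\<forall>i j. B $ i $ j \<ge> 0)}"

definition fobj :: "real^'r^'m \<Rightarrow> real^'m \<Rightarrow> real^'m^'m \<Rightarrow> real" where
  "fobj U ybar B = - (norm (kron (rowmat ybar) (transpose U) *v vecm B))\<^sup>2"

end

theory Submission imports Defs begin

lemma conv_perm_iff:
  "B \<in> conv_perm \<longleftrightarrow> (\<forall>j. (\<Sum>i\<in>UNIV. B$i$j) = 1) \<and> (\<forall>i. (\<Sum>j\<in>UNIV. B$i$j) = 1) \<and> (\<forall>i j. 0 \<le> B$i$j)"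
  by (simp add: conv_perm_def vec_eq_iff matrix_vector_mult_def transpose_def)

lemma perm_in_conv:
  assumes "P \<in> permutation_matrices" shows "P \<in> conv_perm"
proof -
  obtain p where p: "p permutes (UNIV::'a set)" "P = (\<chi> i j. if p i = j then 1 else 0)"
    using assms unfolding permutation_matrices_def by blast
  have col: "(\<Sum>i\<in>UNIV. (if p i = j then 1 else 0::real)) = 1" for j
  proof -
    have "{i. p i = j} = {inv p j}" using p(1)
      by (auto simp: permutes_inverses(1) permutes_inverses(2))
    then show ?thesis by (simp add: sum.If_cases)
  qed
  show ?thesis unfolding conv_perm_iff p(2) using col by simp
qed

lemma finite_perm_mats: "finite (permutation_matrices :: (real^'m^'m) set)"
proof -
  have "permutation_matrices = (\<lambda>p. (\<chi> i j. if p i = j then 1 else 0) :: real^'m^'m) ` {p. p permutes (UNIV::'m set)}"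
    unfolding permutation_matrices_def by auto
  also have "finite \<dots>" by (intro finite_imageI finite_permutations) simp
  finally show ?thesis .
qed

lemma convex_conv: "convex (conv_perm :: (real^'m^'m) set)"
proof (rule convexI)
  fix x y :: "real^'m^'m" and u v :: real
  assume a: "x \<in> conv_perm" "y \<in> conv_perm" "0 \<le> u" "0 \<le> v" "u + v = 1"
  have c: "(\<Sum>i\<in>UNIV. (u *\<^sub>R x + v *\<^sub>R y)$i$j) = u * (\<Sum>i\<in>UNIV. x$i$j) + v * (\<Sum>i\<in>UNIV. y$i$j)" for j
    by (simp add: sum.distrib sum_distrib_left)
  have r: "(\<Sum>j\<in>UNIV. (u *\<^sub>R x + v *\<^sub>R y)$i$j) = u * (\<Sum>j\<in>UNIV. x$i$j) + v * (\<Sum>j\<in>UNIV. y$i$j)" for i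
    by (simp add: sum.distrib sum_distrib_left)
  show "u *\<^sub>R x + v *\<^sub>R y \<in> conv_perm"
    unfolding conv_perm_iff c r using a by (simp add: conv_perm_iff)
qed

lemma compact_conv: "compact (conv_perm :: (real^'m^'m) set)"
proof -
  have cl: "closed (conv_perm :: (real^'m^'m) set)"
  proof -
    have "conv_perm = {B :: real^'m^'m. (\<forall>j. (\<Sum>i\<in>UNIV. B$i$j) = 1) \<and> (\<forall>i. (\<Sum>j\<in>UNIV. B$i$j) = 1) \<and> (\<forall>i j. 0 \<le> B$i$j)}"
      by (auto simp: conv_perm_iff)
    also have "closed \<dots>" by (intro closed_Collect_conj closed_Collect_all closed_Collect_eq closed_Collect_le continuous_intros)
    finally show ?thesis .
  qed
  have "norm B \<le> real CARD('m)" if "B \<in> conv_perm" for B :: "real^'m^'m"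
  proof -
    have "norm B \<le> (\<Sum>i\<in>UNIV. norm (B$i))" unfolding norm_vec_def by (rule L2_set_le_sum) simp
    also have "\<dots> \<le> (\<Sum>i::'m\<in>UNIV. 1)"
    proof (rule sum_mono)
      fix i
      have "norm (B$i) \<le> (\<Sum>j\<in>UNIV. \<bar>B$i$j\<bar>)" by (rule norm_le_l1_cart)
      also have "\<dots> = (\<Sum>j\<in>UNIV. B$i$j)" using that by (simp add: conv_perm_iff)
      also have "\<dots> = 1" using that by (simp add: conv_perm_iff)
      finally show "norm (B$i) \<le> 1" .
    qed
    finally show ?thesis by simp
  qed
  then have "bounded (conv_perm :: (real^'m^'m) set)" unfolding bounded_iff by blast
  with cl show ?thesis using compact_eq_bounded_closed by blast
qed

lemma two_ones:
  fixes f :: "'a::finite \<Rightarrow> real"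
  assumes "\<forall>x. 0 \<le> f x" "sum f UNIV = 1" "f a = 1" "f b = 1" "a \<noteq> b"
  shows False
proof -
  have "sum f {a,b} \<le> sum f UNIV" by (rule sum_mono2) (use assms in auto)
  then show False using assms by simp
qed

lemma one_exists:
  fixes f :: "'a::finite \<Rightarrow> real"
  assumes "\<forall>x. f x = 0 \<or> f x = 1" "sum f UNIV = 1"
  shows "\<exists>!x. f x = 1"
proof -
  have "\<exists>x. f x = 1"
  proof (rule ccontr)
    assume "\<not> ?thesis"
    then have "\<forall>x. f x = 0" using assms(1) by blast
    then show False using assms(2) by simp
  qed
  moreover have "0 \<le> f x" for x using assms(1) by (metis order.refl zero_le_one)
  ultimately show ?thesis using two_ones[of f] assms by blast
qed

lemma zero_one_perm:
  fixes B :: "real^'m^'m"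
  assumes B: "B \<in> conv_perm" and zo: "\<forall>i j. B$i$j = 0 \<or> B$i$j = 1"
  shows "B \<in> permutation_matrices"
proof -
  have row: "\<exists>!j. B$i$j = 1" for i
    by (rule one_exists) (use B zo in \<open>auto simp: conv_perm_iff\<close>)
  have col: "\<exists>!i. B$i$j = 1" for j
    using one_exists[of "\<lambda>i. B$i$j"] B zo by (auto simp: conv_perm_iff)
  define p where "p i = (THE j. B$i$j = 1)" for i
  have pe: "p i = j \<longleftrightarrow> B$i$j = 1" for i j
    using row[of i] theI'[OF row[of i]] unfolding p_def by blast
  have "p permutes UNIV" unfolding permutes_univ using col pe by simp
  moreover have "B = (\<chi> i j. if p i = j then 1 else 0)"
    using zo pe by (auto simp: vec_eq_iff)
  ultimately show ?thesis unfolding permutation_matrices_def by blast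
qed

lemma other_frac:
  fixes f :: "'a::finite \<Rightarrow> real"
  assumes "\<forall>x. 0 \<le> f x" "sum f UNIV = 1" "0 < f a" "f a < 1"
  shows "\<exists>b. b \<noteq> a \<and> 0 < f b \<and> f b < 1"
proof -
  have s: "sum f UNIV = f a + sum f (UNIV - {a})" by (simp add: sum.remove)
  have "\<exists>b\<in>UNIV - {a}. 0 < f b"
  proof (rule ccontr)
    assume "\<not> ?thesis"
    then have "\<forall>x\<in>UNIV - {a}. f x = 0" using assms(1) by (meson antisym not_less)
    then have "sum f (UNIV - {a}) = 0" by (intro sum.neutral) auto
    then show False using s assms by simp
  qed
  then obtain b where b: "b \<noteq> a" "0 < f b" by auto
  have "f b \<le> sum f (UNIV - {a})" by (rule member_le_sum) (use b assms in auto)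
  then show ?thesis using b s assms by auto
qed

lemma card_two:
  fixes F :: "('a \<times> 'b) set"
  assumes fin: "finite F" and h: "\<forall>(a,b)\<in>F. \<exists>b'. b' \<noteq> b \<and> (a,b') \<in> F"
  shows "2 * card (fst ` F) \<le> card F"
proof -
  have eq: "F = Sigma (fst ` F) (\<lambda>a. {b. (a,b) \<in> F})" by force
  have fin2: "\<forall>a\<in>fst ` F. finite {b. (a,b) \<in> F}"
  proof
    fix a assume "a \<in> fst ` F"
    have "{b. (a,b) \<in> F} = snd ` (F \<inter> {p. fst p = a})" by force
    then show "finite {b. (a,b) \<in> F}" using fin by simp
  qed
  have "card F = (\<Sum>a\<in>fst ` F. card {b. (a,b) \<in> F})"
    by (subst eq) (simp add: fin fin2)
  moreover have "2 \<le> card {b. (a,b) \<in> F}" if a: "a \<in> fst ` F" for a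
  proof -
    obtain b where b: "(a,b) \<in> F" using a by force
    then obtain b' where "b' \<noteq> b" "(a,b') \<in> F" using h by blast
    then have "{b,b'} \<subseteq> {b. (a,b) \<in> F}" "card {b,b'} = 2" using b by auto
    then show ?thesis using card_mono fin2 a by metis
  qed
  ultimately show ?thesis
    using sum_mono[of "fst ` F" "\<lambda>_. 2::nat"] by (simp add: mult.commute)
qed

lemma kernel_exists:
  fixes B :: "real^'m^'m"
  assumes B: "B \<in> conv_perm" and F: "F = {(i,j). 0 < B$i$j \<and> B$i$j < 1}" and ne: "F \<noteq> {}"
  shows "\<exists>C::real^'m^'m. C \<noteq> 0 \<and> (\<forall>i j. (i,j) \<notin> F \<longrightarrow> C$i$j = 0)
            \<and> (\<forall>i. (\<Sum>j\<in>UNIV. C$i$j) = 0) \<and> (\<forall>j. (\<Sum>i\<in>UNIV. C$i$j) = 0)"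
proof -
  have nn: "\<forall>i j. 0 \<le> B$i$j" and rs: "\<forall>i. (\<Sum>j\<in>UNIV. B$i$j) = 1" and cs: "\<forall>j. (\<Sum>i\<in>UNIV. B$i$j) = 1"
    using B by (auto simp: conv_perm_iff)
  have finF: "finite F" by simp
  define R where "R = fst ` F"
  define K where "K = snd ` F"
  have rowF: "\<forall>(i,j)\<in>F. \<exists>j'. j' \<noteq> j \<and> (i,j') \<in> F"
  proof (clarify)
    fix i j assume "(i,j) \<in> F"
    then have "0 < B$i$j" "B$i$j < 1" using F by auto
    then show "\<exists>j'. j' \<noteq> j \<and> (i,j') \<in> F"
      using other_frac[of "\<lambda>j. B$i$j" j] nn rs F by auto
  qed
  define G' where "G' = prod.swap ` F"
  have colF: "\<forall>(j,i)\<in>G'. \<exists>i'. i' \<noteq> i \<and> (j,i') \<in> G'"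
  proof (clarify)
    fix i j assume "(j,i) \<in> G'"
    then have "0 < B$i$j" "B$i$j < 1" using F G'_def by auto
    then obtain i' where "i' \<noteq> i" "0 < B$i'$j" "B$i'$j < 1"
      using other_frac[of "\<lambda>i. B$i$j" i] nn cs by auto
    then show "\<exists>i'. i' \<noteq> i \<and> (j,i') \<in> G'" using F G'_def by force
  qed
  have c1: "2 * card R \<le> card F" unfolding R_def by (rule card_two[OF finF rowF])
  have "2 * card (fst ` G') \<le> card G'" by (rule card_two[OF _ colF]) simp
  moreover have "fst ` G' = K" unfolding G'_def K_def by force
  moreover have "card G' = card F" unfolding G'_def by (rule card_image) (metis inj_onI swap_swap)
  ultimately have c2: "2 * card K \<le> card F" by simp
  obtain j0 where j0: "j0 \<in> K" using ne K_def by blast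
  have "K \<noteq> {}" using j0 by auto
  then have "card K > 0" by (simp add: card_gt_0_iff)
  then have cardK: "card K \<ge> 1" by simp
  define E where "E = (\<lambda>(i,j). axis i (axis j 1) :: real^'m^'m)"
  define G where "G = E ` F"
  have GB: "G \<subseteq> Basis" unfolding G_def E_def by (auto simp: Basis_vec_def)
  have indG: "independent G" by (rule independent_mono[OF independent_Basis GB])
  have injE: "inj_on E F" unfolding E_def inj_on_def by (auto simp: axis_eq_axis)
  have dimV: "dim (span G) = card F"
    using dim_span_eq_card_independent[OF indG] card_image[OF injE] G_def by simp
  define h where "h = (\<lambda>C::real^'m^'m. ((\<chi> i. if i \<in> R then (\<Sum>j\<in>UNIV. C$i$j) else 0) :: real^'m,
                  (\<chi> j. if j \<in> K - {j0} then (\<Sum>i\<in>UNIV. C$i$j) else 0) :: real^'m))"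
  have lin: "linear h"
    by (rule linearI) (auto simp: h_def vec_eq_iff sum.distrib sum_distrib_left)
  define T where "T = (\<lambda>i. (axis i 1 :: real^'m, 0 :: real^'m)) ` R \<union> (\<lambda>j. (0 :: real^'m, axis j 1 :: real^'m)) ` (K - {j0})"
  have finT: "finite T" unfolding T_def by simp
  have cardT: "card T \<le> card R + (card K - 1)"
  proof -
    have "card T \<le> card ((\<lambda>i. (axis i 1 :: real^'m, 0 :: real^'m)) ` R) + card ((\<lambda>j. (0 :: real^'m, axis j 1 :: real^'m)) ` (K - {j0}))"
      unfolding T_def by (rule card_Un_le)
    also have "\<dots> \<le> card R + card (K - {j0})" by (intro add_mono card_image_le) auto
    also have "card (K - {j0}) = card K - 1" using j0 by simp
    finally show ?thesis .
  qed
  have hT: "h C \<in> span T" for C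
  proof -
    define a where "a = (\<lambda>i. \<Sum>j\<in>UNIV. C$i$j)"
    define b where "b = (\<lambda>j. \<Sum>i\<in>UNIV. C$i$j)"
    have "h C = (\<Sum>i\<in>R. a i *\<^sub>R (axis i 1 :: real^'m, 0 :: real^'m)) + (\<Sum>j\<in>K - {j0}. b j *\<^sub>R (0 :: real^'m, axis j 1 :: real^'m))"
      unfolding prod_eq_iff fst_add snd_add fst_sum snd_sum
      by (auto simp: h_def a_def b_def vec_eq_iff sum_component axis_def if_distrib sum.delta sum.delta' cong: if_cong)
    also have "\<dots> \<in> span T"
      by (intro span_add span_sum span_scale span_base) (auto simp: T_def)
    finally show ?thesis .
  qed
  have "dim (h ` span G) \<le> card T" by (rule dim_le_card[OF _ finT]) (use hT in auto)
  moreover have "card T < card F" using cardT c1 c2 cardK by linarith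
  ultimately have "\<not> inj_on h (span G)"
  proof (intro notI)
    assume le: "dim (h ` span G) \<le> card T" and lt: "card T < card F" and inj: "inj_on h (span G)"
    then have "inj_on h (span (span G))" by (simp only: span_span)
    then have "dim (h ` span G) = dim (span G)" by (rule dim_image_eq[OF lin])
    then show False using le lt dimV by simp
  qed
  then obtain C where C: "C \<in> span G" "h C = 0" "C \<noteq> 0"
    using linear_inj_on_iff_eq_0[OF lin subspace_span] by blast
  have supp: "\<forall>i j. (i,j) \<notin> F \<longrightarrow> C$i$j = 0"
  proof -
    have "\<forall>i j. (i,j) \<notin> F \<longrightarrow> C$i$j = 0"
    proof (rule span_induct[OF C(1)])
      show "subspace {C::real^'m^'m. \<forall>i j. (i,j) \<notin> F \<longrightarrow> C$i$j = 0}"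
        by (auto simp: subspace_def)
      fix x assume "x \<in> G"
      then show "\<forall>i j. (i,j) \<notin> F \<longrightarrow> x$i$j = 0"
        by (auto simp: G_def E_def axis_def)
    qed
    then show ?thesis by simp
  qed
  have rows: "(\<Sum>j\<in>UNIV. C$i$j) = 0" for i
  proof (cases "i \<in> R")
    case True
    have "fst (h C) $ i = 0" using C(2) by simp
    then show ?thesis using True by (simp add: h_def)
  next
    case False
    then have "\<forall>j. (i,j) \<notin> F" using R_def by force
    then show ?thesis using supp by simp
  qed
  have cols0: "(\<Sum>i\<in>UNIV. C$i$j) = 0" if "j \<noteq> j0" for j
  proof (cases "j \<in> K")
    case True
    have "snd (h C) $ j = 0" using C(2) by simp
    then show ?thesis using True that by (simp add: h_def)
  next
    case False
    then have "\<forall>i. (i,j) \<notin> F" using K_def by force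
    then show ?thesis using supp by simp
  qed
  have "(\<Sum>j\<in>UNIV. \<Sum>i\<in>UNIV. C$i$j) = 0"
    by (subst sum.swap) (simp add: rows)
  moreover have "(\<Sum>j\<in>UNIV. \<Sum>i\<in>UNIV. C$i$j) = (\<Sum>i\<in>UNIV. C$i$j0) + (\<Sum>j\<in>UNIV - {j0}. \<Sum>i\<in>UNIV. C$i$j)"
    by (simp add: sum.remove)
  moreover have "(\<Sum>j\<in>UNIV - {j0}. \<Sum>i\<in>UNIV. C$i$j) = 0" using cols0 by simp
  ultimately have "(\<Sum>i\<in>UNIV. C$i$j0) = 0" by simp
  then have cols: "(\<Sum>i\<in>UNIV. C$i$j) = 0" for j using cols0 by (cases "j = j0") auto
  show ?thesis using C(3) supp rows cols by blast
qed

lemma extreme_perm: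
  fixes B :: "real^'m^'m"
  assumes ext: "B extreme_point_of conv_perm"
  shows "B \<in> permutation_matrices"
proof -
  have B: "B \<in> conv_perm" using ext by (simp add: extreme_point_of_def)
  have nn: "\<forall>i j. 0 \<le> B$i$j" and rs: "\<forall>i. (\<Sum>j\<in>UNIV. B$i$j) = 1" and cs: "\<forall>j. (\<Sum>i\<in>UNIV. B$i$j) = 1"
    using B by (auto simp: conv_perm_iff)
  have le1: "B$i$j \<le> 1" for i j
  proof -
    have "B$i$j \<le> (\<Sum>j\<in>UNIV. B$i$j)" by (rule member_le_sum) (use nn in auto)
    then show ?thesis using rs by simp
  qed
  define F where "F = {(i,j). 0 < B$i$j \<and> B$i$j < 1}"
  show ?thesis
  proof (cases "F = {}")
    case True
    then have "\<forall>i j. B$i$j = 0 \<or> B$i$j = 1" using nn le1 unfolding F_def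
      by (metis (mono_tags, lifting) case_prodI empty_iff mem_Collect_eq order_less_le)
    then show ?thesis using zero_one_perm B by blast
  next
    case False
    obtain C :: "real^'m^'m" where C: "C \<noteq> 0" "\<forall>i j. (i,j) \<notin> F \<longrightarrow> C$i$j = 0"
      "\<forall>i. (\<Sum>j\<in>UNIV. C$i$j) = 0" "\<forall>j. (\<Sum>i\<in>UNIV. C$i$j) = 0"
      using kernel_exists[OF B F_def False] by blast
    define \<delta> where "\<delta> = Min ((\<lambda>(i,j). B$i$j) ` F)"
    have finF: "finite F" by simp
    have \<delta>le: "\<delta> \<le> B$i$j" if "(i,j) \<in> F" for i j
      unfolding \<delta>_def using that finF by (intro Min_le) force+
    have \<delta>pos: "\<delta> > 0"
    proof -
      have "\<delta> \<in> (\<lambda>(i,j). B$i$j) ` F" unfolding \<delta>_def using False finF by (intro Min_in) auto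
      then show ?thesis unfolding F_def by auto
    qed
    define M where "M = 1 + (\<Sum>i\<in>UNIV. \<Sum>j\<in>UNIV. \<bar>C$i$j\<bar>)"
    have CM: "\<bar>C$i$j\<bar> \<le> M" for i j
    proof -
      have "\<bar>C$i$j\<bar> \<le> (\<Sum>j\<in>UNIV. \<bar>C$i$j\<bar>)" by (rule member_le_sum) auto
      also have "\<dots> \<le> (\<Sum>i\<in>UNIV. \<Sum>j\<in>UNIV. \<bar>C$i$j\<bar>)"
        by (rule member_le_sum[where f="\<lambda>i. \<Sum>j\<in>UNIV. \<bar>C$i$j\<bar>"]) (auto intro: sum_nonneg)
      finally show ?thesis unfolding M_def by simp
    qed
    have Mpos: "M > 0" unfolding M_def by (smt (verit) sum_nonneg abs_ge_zero)
    define \<epsilon> where "\<epsilon> = \<delta> / M"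
    have \<epsilon>pos: "\<epsilon> > 0" unfolding \<epsilon>_def using \<delta>pos Mpos by simp
    have small: "\<epsilon> * \<bar>C$i$j\<bar> \<le> \<delta>" for i j
    proof -
      have "\<epsilon> * \<bar>C$i$j\<bar> \<le> \<epsilon> * M" using CM \<epsilon>pos by (intro mult_left_mono) auto
      also have "\<dots> = \<delta>" unfolding \<epsilon>_def using Mpos by simp
      finally show ?thesis .
    qed
    have mem: "B + t *\<^sub>R C \<in> conv_perm" if t: "\<bar>t\<bar> = \<epsilon>" for t
    proof -
      have "0 \<le> B$i$j + t * C$i$j" for i j
      proof (cases "(i,j) \<in> F")
        case True
        have "\<bar>t * C$i$j\<bar> \<le> \<delta>" using small[of i j] t by (simp add: abs_mult)
        then show ?thesis using \<delta>le[OF True] by linarith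
      next
        case False
        then show ?thesis using C(2) nn by simp
      qed
      moreover have "(\<Sum>j\<in>UNIV. (B + t *\<^sub>R C)$i$j) = 1" for i
        using rs C(3) by (simp add: sum.distrib sum_distrib_left[symmetric])
      moreover have "(\<Sum>i\<in>UNIV. (B + t *\<^sub>R C)$i$j) = 1" for j
        using cs C(4) by (simp add: sum.distrib sum_distrib_left[symmetric])
      ultimately show ?thesis by (simp add: conv_perm_iff)
    qed
    have m1: "B + (-\<epsilon>) *\<^sub>R C \<in> conv_perm" by (rule mem) (use \<epsilon>pos in simp)
    have m2: "B + \<epsilon> *\<^sub>R C \<in> conv_perm" using mem \<epsilon>pos by simp
    have mid: "B = midpoint (B + (-\<epsilon>) *\<^sub>R C) (B + \<epsilon> *\<^sub>R C)"
    proof -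
      have "(B + (-\<epsilon>) *\<^sub>R C) + (B + \<epsilon> *\<^sub>R C) = B + B" by simp
      also have "\<dots> = (2::real) *\<^sub>R B" by (rule scaleR_2[symmetric])
      finally show ?thesis unfolding midpoint_def by simp
    qed
    have ne: "B + (-\<epsilon>) *\<^sub>R C \<noteq> B + \<epsilon> *\<^sub>R C"
    proof
      assume eq: "B + (-\<epsilon>) *\<^sub>R C = B + \<epsilon> *\<^sub>R C"
      obtain i j where ij: "C$i$j \<noteq> 0" using C(1) by (auto simp: vec_eq_iff)
      have "(B + (-\<epsilon>) *\<^sub>R C)$i$j = (B + \<epsilon> *\<^sub>R C)$i$j"
        using eq by (rule arg_cong[where f="\<lambda>M. M$i$j"])
      then have "- \<epsilon> * C$i$j = \<epsilon> * C$i$j" by simp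
      then show False using ij \<epsilon>pos by simp
    qed
    have "B \<in> open_segment (B + (-\<epsilon>) *\<^sub>R C) (B + \<epsilon> *\<^sub>R C)"
      using ne mid midpoint_in_open_segment by metis
    then show ?thesis using ext m1 m2 unfolding extreme_point_of_def by blast
  qed
qed

lemma sq_norm_convex:
  fixes a b :: "'a::real_inner"
  assumes "0 \<le> t" "t \<le> 1"
  shows "(norm ((1 - t) *\<^sub>R a + t *\<^sub>R b))\<^sup>2 \<le> (1 - t) * (norm a)\<^sup>2 + t * (norm b)\<^sup>2"
proof -
  have "(1 - t) * (norm a)\<^sup>2 + t * (norm b)\<^sup>2 - (norm ((1 - t) *\<^sub>R a + t *\<^sub>R b))\<^sup>2 = t * (1 - t) * (norm (a - b))\<^sup>2"
    by (simp add: power2_norm_eq_inner inner_add_left inner_add_right inner_diff_left inner_diff_right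
        inner_commute[of b a] algebra_simps)
  moreover have "0 \<le> t * (1 - t) * (norm (a - b))\<^sup>2" using assms by simp
  ultimately show ?thesis by linarith
qed

lemma convex_sq_linear:
  fixes l :: "'a::real_vector \<Rightarrow> 'b::real_inner"
  assumes "linear l"
  shows "convex_on UNIV (\<lambda>x. (norm (l x))\<^sup>2)"
proof (rule convex_onI)
  fix t :: real and x y assume "0 < t" "t < 1"
  then show "(norm (l ((1 - t) *\<^sub>R x + t *\<^sub>R y)))\<^sup>2 \<le> (1 - t) * (norm (l x))\<^sup>2 + t * (norm (l y))\<^sup>2"
    using sq_norm_convex[of t "l x" "l y"] linear_add[OF assms] linear_scale[OF assms] by simp
qed simp

lemma vecm_linear: "linear (vecm :: real^'n^'m \<Rightarrow> real^('n \<times> 'm))"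
  by (rule linearI) (simp_all add: vecm_def vec_eq_iff)

theorem proposition1:
  fixes A :: "real^'n^'m" and U :: "real^'r^'m" and S :: "real^'r^'r" and V :: "real^'r^'n"
    and y :: "real^'m" and Pihat :: "real^'m^'m"
  assumes A_nz: "A \<noteq> 0"
    and rankA: "rank A = CARD('r)"
    and U_orth: "transpose U ** U = mat 1"
    and V_orth: "transpose V ** V = mat 1"
    and S_diag: "\<forall>i j. i \<noteq> j \<longrightarrow> S $ i $ j = 0"
    and S_pos: "\<forall>i. S $ i $ i > 0"
    and svd: "A = U ** S ** transpose V"
    and y_nz: "y \<noteq> 0"
    and uniq: "Pihat \<in> permutation_matrices"
      "\<forall>P \<in> permutation_matrices. P \<noteq> Pihat \<longrightarrow>
          fobj U ((1 / norm y) *\<^sub>R y) Pihat < fobj U ((1 / norm y) *\<^sub>R y) P"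
  shows "Pihat \<in> conv_perm \<and>
         (\<forall>B \<in> conv_perm. B \<noteq> Pihat \<longrightarrow>
            fobj U ((1 / norm y) *\<^sub>R y) Pihat < fobj U ((1 / norm y) *\<^sub>R y) B)"
proof -
  define L where "L = kron (rowmat ((1 / norm y) *\<^sub>R y)) (transpose U)"
  define g where "g = (\<lambda>B. (norm (L *v vecm B))\<^sup>2)"
  have fg: "fobj U ((1 / norm y) *\<^sub>R y) B = - g B" for B unfolding fobj_def g_def L_def by simp
  have lin: "linear (\<lambda>B::real^'m^'m. L *v vecm B)"
    using linear_compose[OF vecm_linear matrix_vector_mul_linear[of L]] by (simp add: o_def)
  have cvx: "convex_on UNIV g" unfolding g_def by (rule convex_sq_linear[OF lin])
  define P where "P = (permutation_matrices :: (real^'m^'m) set)"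
  have finP: "finite P" unfolding P_def by (rule finite_perm_mats)
  have PiP: "Pihat \<in> P" using uniq(1) P_def by simp
  have gless: "g Q < g Pihat" if "Q \<in> P" "Q \<noteq> Pihat" for Q
    using uniq(2) that fg P_def by fastforce
  have "B \<in> conv_perm \<Longrightarrow> B \<noteq> Pihat \<Longrightarrow> g B < g Pihat" for B
  proof -
    assume B: "B \<in> conv_perm" and BP: "B \<noteq> Pihat"
    have "B \<in> convex hull {x. x extreme_point_of conv_perm}"
      using Krein_Milman_Minkowski[OF compact_conv convex_conv] B by blast
    also have "\<dots> \<subseteq> convex hull P"
      by (rule hull_mono) (use extreme_perm P_def in blast)
    finally obtain u where u: "\<forall>x\<in>P. 0 \<le> u x" "sum u P = 1" "(\<Sum>x\<in>P. u x *\<^sub>R x) = B"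
      using convex_hull_finite[OF finP] by blast
    have "g B \<le> (\<Sum>x\<in>P. u x * g x)"
      using convex_on_sum[OF finP _ cvx u(2), of id] u(1) u(3) PiP by auto
    moreover have "\<exists>Q\<in>P. Q \<noteq> Pihat \<and> u Q > 0"
    proof (rule ccontr)
      assume "\<not> ?thesis"
      then have z: "\<forall>x\<in>P - {Pihat}. u x = 0" using u(1) by force
      have "sum u P = u Pihat + sum u (P - {Pihat})" using finP PiP by (simp add: sum.remove)
      then have "u Pihat = 1" using z u(2) by simp
      have "(\<Sum>x\<in>P. u x *\<^sub>R x) = u Pihat *\<^sub>R Pihat + (\<Sum>x\<in>P - {Pihat}. u x *\<^sub>R x)"
        using finP PiP by (simp add: sum.remove)
      then have "B = Pihat" using z u(3) \<open>u Pihat = 1\<close> by simp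
      then show False using BP by simp
    qed
    then have "(\<Sum>x\<in>P. u x * g x) < (\<Sum>x\<in>P. u x * g Pihat)"
    proof -
      assume "\<exists>Q\<in>P. Q \<noteq> Pihat \<and> u Q > 0"
      then obtain Q where Q: "Q \<in> P" "Q \<noteq> Pihat" "u Q > 0" by blast
      show ?thesis
      proof (rule sum_strict_mono_ex1[OF finP])
        show "\<forall>x\<in>P. u x * g x \<le> u x * g Pihat"
          using u(1) gless by (metis mult_left_mono order.refl order_less_imp_le)
        show "\<exists>a\<in>P. u a * g a < u a * g Pihat"
          using Q gless by (intro bexI[of _ Q]) auto
      qed
    qed
    moreover have "(\<Sum>x\<in>P. u x * g Pihat) = g Pihat" using u(2) by (simp add: sum_distrib_right[symmetric])
    ultimately show "g B < g Pihat" by linarith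
  qed
  then show ?thesis using perm_in_conv[OF uniq(1)] fg by auto
qed

end
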